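(* For every integer $n\geq 4$, the wheel $W_n=C_n\lor K_1$ satisfies $\eta(W_n)=2$ if $n$ is even and $\eta(W_n)=3$ if $n$ is odd.
   Context: All graphs are finite, simple and undirected. $C_n$ is the cycle on $n$ vertices, $K_1$ is the graph with one vertex, and $G_1\lor G_2$ (join) is the graph on $V(G_1)\cup V(G_2)$ with edges $E(G_1)\cup E(G_2)\cup\{(u,v):u\in V(G_1),v\in V(G_2)\}$. For a vertex $v$, $N(v)$ is its set of neighbours. For a positive integer $k$, $[k]=\{1,\dots,k\}$. For a labeling $f:V(G)\to[k]$ and $S\subseteq V(G)$, $f(S)=\sum_{u\in S}f(u)$. A labeling $f:V(G)\to[k]$ is an additive $k$-coloring if $f(N(u))\neq f(N(v))$ for every edge $(u,v)$ of $G$. The additive chromatic number $\eta(G)$ is the least $k$ for which $G$ has an additive $k$-coloring. *)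

theory Defs
  imports Main
begin

definition simple_graph :: "'a set \<Rightarrow> 'a set set \<Rightarrow> bool" where
  "simple_graph V E \<longleftrightarrow> finite V \<and> (\<forall>e\<in>E. e \<subseteq> V \<and> card e = 2)"

definition nbhd :: "'a set set \<Rightarrow> 'a \<Rightarrow> 'a set" where
  "nbhd E v = {u. {u, v} \<in> E}"

definition additive_coloring :: "'a set \<Rightarrow> 'a set set \<Rightarrow> nat \<Rightarrow> ('a \<Rightarrow> nat) \<Rightarrow> bool" where
  "additive_coloring V E k f \<longleftrightarrow>
     (\<forall>v\<in>V. f v \<in> {1..k}) \<and>
     (\<forall>u v. {u, v} \<in> E \<longrightarrow> sum f (nbhd E u) \<noteq> sum f (nbhd E v))"

definition additive_chromatic_number :: "'a set \<Rightarrow> 'a set set \<Rightarrow> nat" where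
  "additive_chromatic_number V E = (LEAST k. k > 0 \<and> (\<exists>f. additive_coloring V E k f))"

text \<open>Wheel W_n = C_n join K_1: cycle vertices 0..n-1, hub vertex n.\<close>
definition wheel_vertices :: "nat \<Rightarrow> nat set" where
  "wheel_vertices n = {0..n}"

definition wheel_edges :: "nat \<Rightarrow> nat set set" where
  "wheel_edges n = {{i, (i + 1) mod n} | i. i < n} \<union> {{i, n} | i. i < n}"

end

theory Submission imports Defs begin

definition nb1 :: "nat \<Rightarrow> nat \<Rightarrow> nat" where "nb1 n i = (if i = n - 1 then 0 else i + 1)"
definition nb2 :: "nat \<Rightarrow> nat \<Rightarrow> nat" where "nb2 n i = (if i = 0 then n - 1 else i - 1)"

lemma mod_nb1: "i < n \<Longrightarrow> Suc i mod n = nb1 n i"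
  unfolding nb1_def by (auto simp: mod_if)

lemma nb21: "i < n \<Longrightarrow> nb2 n (nb1 n i) = i"
  unfolding nb1_def nb2_def by auto

lemma nb1_lt: "i < n \<Longrightarrow> nb1 n i < n" unfolding nb1_def by auto
lemma nb2_lt: "i < n \<Longrightarrow> nb2 n i < n" unfolding nb2_def by auto

lemma wheel_edges_alt: "n \<ge> 4 \<Longrightarrow> wheel_edges n = {{i, nb1 n i} | i. i < n} \<union> {{i, n} | i. i < n}"
proof -
  have "{{i, (i + 1) mod n} | i. i < n} = {{i, nb1 n i} | i. i < n}"
    by (rule Collect_cong) (metis Suc_eq_plus1 mod_nb1)
  then show ?thesis unfolding wheel_edges_def by simp
qed

lemma nbhd_cyc:
  assumes "n \<ge> 4" "i < n"
  shows "nbhd (wheel_edges n) i = {nb1 n i, nb2 n i, n}"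
proof -
  have "u \<in> nbhd (wheel_edges n) i \<longleftrightarrow> u \<in> {nb1 n i, nb2 n i, n}" for u
  proof
    assume "u \<in> nbhd (wheel_edges n) i"
    then have "{u, i} \<in> wheel_edges n" by (simp add: nbhd_def)
    then obtain j where "j < n" "{u,i} = {j, nb1 n j} \<or> {u, i} = {j, n}"
      using assms by (auto simp: wheel_edges_alt)
    then show "u \<in> {nb1 n i, nb2 n i, n}"
      using assms by (auto simp: doubleton_eq_iff nb1_def nb2_def split: if_splits)
  next
    assume "u \<in> {nb1 n i, nb2 n i, n}"
    then consider "u = nb1 n i" | "u = nb2 n i" | "u = n" by blast
    then have "{u, i} \<in> wheel_edges n"
    proof cases
      case 1 then show ?thesis using assms by (auto simp: wheel_edges_alt insert_commute)
    next
      case 2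
      have "nb2 n i < n" "nb1 n (nb2 n i) = i" using assms by (auto simp: nb1_def nb2_def)
      then show ?thesis using 2 assms by (auto simp: wheel_edges_alt)
    next
      case 3 then show ?thesis using assms by (auto simp: wheel_edges_alt insert_commute)
    qed
    then show "u \<in> nbhd (wheel_edges n) i" by (simp add: nbhd_def)
  qed
  then show ?thesis by blast
qed

lemma nbhd_hub:
  assumes "n \<ge> 4"
  shows "nbhd (wheel_edges n) n = {0..<n}"
proof -
  have "u \<in> nbhd (wheel_edges n) n \<longleftrightarrow> u < n" for u
  proof
    assume "u \<in> nbhd (wheel_edges n) n"
    then have "{u, n} \<in> wheel_edges n" by (simp add: nbhd_def)
    then obtain j where "j < n" "{u,n} = {j, nb1 n j} \<or> {u, n} = {j, n}"
      using assms by (auto simp: wheel_edges_alt)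
    then show "u < n" using nb1_lt[of j n]
      by (auto simp: doubleton_eq_iff)
  next
    assume "u < n"
    then have "{u, n} \<in> {{i, n} | i. i < n}" by blast
    then show "u \<in> nbhd (wheel_edges n) n"
      using assms unfolding nbhd_def wheel_edges_alt[OF assms] by blast
  qed
  then show ?thesis by (intro set_eqI) (metis atLeast0LessThan lessThan_iff)
qed

lemma sum_cyc:
  assumes "n \<ge> 4" "i < n"
  shows "sum f (nbhd (wheel_edges n) i) = f (nb1 n i) + f (nb2 n i) + f n"
proof -
  have "nb1 n i \<noteq> nb2 n i" "nb1 n i \<noteq> n" "nb2 n i \<noteq> n"
    using assms by (auto simp: nb1_def nb2_def)
  then show ?thesis using assms by (simp add: nbhd_cyc add.assoc)
qed

lemma edge_cyc:
  assumes "n \<ge> 4" "i < n" shows "{i, nb1 n i} \<in> wheel_edges n"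
  using assms by (auto simp: wheel_edges_alt)

lemma edge_hub:
  assumes "n \<ge> 4" "i < n" shows "{i, n} \<in> wheel_edges n"
  using assms by (auto simp: wheel_edges_alt)

lemma local4:
  fixes x y z w :: nat
  assumes "x \<in> {1..2}" "y \<in> {1..2}" "z \<in> {1..2}" "w \<in> {1..2}" "x + z \<noteq> y + w"
  shows "(x + z > y + 1) \<noteq> (y + w > z + 1)"
  using assms by auto

lemma lower:
  assumes n: "n \<ge> 4" and col: "additive_coloring (wheel_vertices n) (wheel_edges n) k f"
    and k: "k \<le> 2"
  shows "even n \<and> k \<ge> 2"
proof -
  have fv: "f v \<in> {1..2}" if "v \<le> n" for v
    using col k that by (force simp: additive_coloring_def wheel_vertices_def)
  have cyc: "f (nb1 n i) + f (nb2 n i) \<noteq> f (nb1 n (nb1 n i)) + f i" if "i < n" for i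
  proof -
    have "sum f (nbhd (wheel_edges n) i) \<noteq> sum f (nbhd (wheel_edges n) (nb1 n i))"
      using col edge_cyc[OF n that] by (auto simp: additive_coloring_def)
    then show ?thesis unfolding sum_cyc[OF n that] sum_cyc[OF n nb1_lt[OF that]] nb21[OF that]
      by simp
  qed
  define c where "c i = (f (nb2 n i) + f (nb1 n i) > f i + 1)" for i
  have alt: "c (nb1 n i) = (\<not> c i)" if "i < n" for i
  proof -
    have "(f (nb2 n i) + f (nb1 n i) > f i + 1) \<noteq> (f i + f (nb1 n (nb1 n i)) > f (nb1 n i) + 1)"
      apply (rule local4)
      using fv nb1_lt[OF that] nb2_lt[OF that] nb1_lt[OF nb1_lt[OF that]] that cyc[OF that]
      by (auto simp: add.commute)
    then show ?thesis unfolding c_def using nb21[OF that] by auto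
  qed
  have par: "c i = (c 0 = even i)" if "i < n" for i
    using that
  proof (induction i)
    case 0 then show ?case by simp
  next
    case (Suc i)
    then have "nb1 n i = Suc i" by (simp add: nb1_def)
    then show ?case using alt[of i] Suc by auto
  qed
  have "k \<ge> 2"
  proof (rule ccontr)
    assume "\<not> k \<ge> 2"
    then have "f v = 1" if "v \<le> n" for v
      using col that by (force simp: additive_coloring_def wheel_vertices_def)
    then have "\<not> c 0" "\<not> c 1" using n unfolding c_def nb1_def nb2_def by auto
    then show False using par[of 1] n by auto
  qed
  moreover have "even n"
  proof (rule ccontr)
    assume "odd n"
    then have "c (n - 1) = c 0" using par[of "n-1"] n by auto
    moreover have "nb1 n (n - 1) = 0" by (simp add: nb1_def)
    ultimately show False using alt[of "n-1"] n by auto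
  qed
  ultimately show ?thesis by simp
qed

lemma upper:
  assumes n: "n \<ge> 4" and fv: "\<And>v. v \<le> n \<Longrightarrow> f v \<in> {1..k}"
    and cyc: "\<And>i. i < n \<Longrightarrow> f (nb1 n i) + f (nb2 n i) \<noteq> f (nb1 n (nb1 n i)) + f i"
    and hub: "\<And>i. i < n \<Longrightarrow> f (nb1 n i) + f (nb2 n i) + f n \<noteq> sum f {0..<n}"
  shows "additive_coloring (wheel_vertices n) (wheel_edges n) k f"
proof -
  have ec: "sum f (nbhd (wheel_edges n) i) \<noteq> sum f (nbhd (wheel_edges n) (nb1 n i))" if "i < n" for i
    unfolding sum_cyc[OF n that] sum_cyc[OF n nb1_lt[OF that]] nb21[OF that] using cyc[OF that] by simp
  have eh: "sum f (nbhd (wheel_edges n) i) \<noteq> sum f (nbhd (wheel_edges n) n)" if "i < n" for i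
    unfolding sum_cyc[OF n that] nbhd_hub[OF n] using hub[OF that] by simp
  have "sum f (nbhd (wheel_edges n) u) \<noteq> sum f (nbhd (wheel_edges n) v)"
    if "{u, v} \<in> wheel_edges n" for u v
  proof -
    obtain i where "i < n" "{u,v} = {i, nb1 n i} \<or> {u, v} = {i, n}"
      using \<open>{u, v} \<in> wheel_edges n\<close> n by (auto simp: wheel_edges_alt)
    then show ?thesis using ec[of i] eh[of i] by (auto simp: doubleton_eq_iff)
  qed
  then show ?thesis using fv by (auto simp: additive_coloring_def wheel_vertices_def)
qed

lemma alt_sum: "(\<Sum>i<2*m. (if even i then 1 else 2::nat)) = 3 * m"
  by (induction m) auto

lemma alt_sum1: "(\<Sum>i<2*m+1. (if even i then 1 else 2::nat)) = 3 * m + 1"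
  using alt_sum[of m] by simp

lemma even_case:
  assumes n: "n \<ge> 4" "even n"
  shows "additive_coloring (wheel_vertices n) (wheel_edges n) 2 (\<lambda>i. if even i then 1 else 2)"
    (is "additive_coloring _ _ _ ?f")
proof (rule upper[OF n(1)])
  have par: "even (nb1 n i) = odd i \<and> even (nb2 n i) = odd i" if "i < n" for i
    using n that by (auto simp: nb1_def nb2_def)
  obtain m where m0: "n = 2*m" using n(2) by (auto elim: evenE)
  have m: "n = 2*m" "m \<ge> 2" using m0 n(1) by auto
  have sm: "sum ?f {0..<n} = 3 * m" using alt_sum[of m] m by (simp add: lessThan_atLeast0)
  show "?f v \<in> {1..2}" for v by auto
  show "?f (nb1 n i) + ?f (nb2 n i) \<noteq> ?f (nb1 n (nb1 n i)) + ?f i" if "i < n" for i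
    using par[OF that] par[OF nb1_lt[OF that]] nb21[OF that] by auto
  show "?f (nb1 n i) + ?f (nb2 n i) + ?f n \<noteq> sum ?f {0..<n}" if "i < n" for i
    using par[OF that] sm m n by auto
qed

lemma odd_case:
  assumes n: "n \<ge> 4" "odd n"
  shows "additive_coloring (wheel_vertices n) (wheel_edges n) 3
     (\<lambda>i. if i = n - 1 then 3 else if i = n - 2 then 1 else if even i then 1 else 2)"
    (is "additive_coloring _ _ _ ?f")
proof (rule upper[OF n(1)])
  obtain j where j: "n = 2*j + 1" using n(2) by (auto elim: oddE)
  define m where "m = j - 1"
  have m: "n = 2*m + 3" "m \<ge> 1" using j n(1) unfolding m_def by auto
  define g where "g i = (if i = 0 then 5 else if i = n - 3 then 3 else if i = n - 2 then 4
      else if i = n - 1 then 2 else if even i then 4 else (2::nat))" for i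
  have S: "?f (nb1 n i) + ?f (nb2 n i) = g i" if hi: "i < n" for i
  proof -
    consider "i = 0" | "i = 2*m+2" | "i = 2*m+1" | "i = 2*m" | "1 \<le> i \<and> i < 2*m"
      using hi m by linarith
    then show ?thesis
    proof cases
      case 1
      then have "nb1 n i = 1" "nb2 n i = 2*m+2" using m by (auto simp: nb1_def nb2_def)
      then show ?thesis using 1 m by (simp add: g_def)
    next
      case 2
      then have "nb1 n i = 0" "nb2 n i = 2*m+1" using m by (auto simp: nb1_def nb2_def)
      then show ?thesis using 2 m by (simp add: g_def)
    next
      case 3
      then have "nb1 n i = 2*m+2" "nb2 n i = 2*m" using m by (auto simp: nb1_def nb2_def)
      then show ?thesis using 3 m by (simp add: g_def)
    next
      case 4
      then have "nb1 n i = 2*m+1" "nb2 n i = 2*m - 1" using m by (auto simp: nb1_def nb2_def)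
      moreover have "odd (2*m - 1)" using m by simp
      ultimately show ?thesis using 4 m by (simp add: g_def; arith)
    next
      case 5
      then have "nb1 n i = i + 1" "nb2 n i = i - 1" using m by (auto simp: nb1_def nb2_def)
      moreover have "even (i+1) = odd i" "even (i - 1) = odd i" using 5 by auto
      ultimately show ?thesis using 5 m by (simp add: g_def; presburger)
    qed
  qed
  have fn: "?f n = 2" using m by auto
  have sm: "sum ?f {0..<n} = 3 * m + 5"
  proof -
    have e: "{0..<n} = {0..<Suc (Suc (2*m+1))}" using m(1) by (simp add: eval_nat_numeral)
    have s1: "sum ?f {0..<n} = sum ?f {0..<2*m+1} + ?f (2*m+1) + ?f (Suc (2*m+1))"
      by (simp only: e sum.atLeast0_lessThan_Suc)
    have s2: "?f (2*m+1) = 1" "?f (Suc (2*m+1)) = 3" using m by auto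
    have s3: "sum ?f {0..<n} = sum ?f {0..<2*m+1} + 4" using s1 s2 by simp
    have "sum ?f {0..<2*m+1} = (\<Sum>i<2*m+1. (if even i then 1 else 2::nat))"
      by (rule sum.cong) (use m in auto)
    then show ?thesis using s3 alt_sum1[of m] by (simp add: lessThan_atLeast0)
  qed
  show "?f v \<in> {1..3}" for v by auto
  show "?f (nb1 n i) + ?f (nb2 n i) \<noteq> ?f (nb1 n (nb1 n i)) + ?f i" if "i < n" for i
  proof -
    have A: "?f (nb1 n (nb1 n i)) + ?f i = g (nb1 n i)"
      using S[OF nb1_lt[OF that]] by (simp only: nb21[OF that])
    have B: "g i \<noteq> g (nb1 n i)"
      using that m unfolding g_def nb1_def by auto
    show ?thesis unfolding A S[OF that] using B .
  qed
  show "?f (nb1 n i) + ?f (nb2 n i) + ?f n \<noteq> sum ?f {0..<n}" if "i < n" for i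
  proof -
    have "g i \<le> 5" unfolding g_def by auto
    then show ?thesis using S[OF that] fn sm m by simp
  qed
qed

theorem mainTheorem8:
  fixes n :: nat
  assumes "n \<ge> 4"
  shows "additive_chromatic_number (wheel_vertices n) (wheel_edges n) = (if even n then 2 else 3)"
  unfolding additive_chromatic_number_def
proof (rule Least_equality)
  show "0 < (if even n then 2 else 3::nat) \<and> (\<exists>f. additive_coloring (wheel_vertices n) (wheel_edges n) (if even n then 2 else 3) f)"
    using even_case[OF assms] odd_case[OF assms] by auto
next
  fix k assume k: "0 < k \<and> (\<exists>f. additive_coloring (wheel_vertices n) (wheel_edges n) k f)"
  show "(if even n then 2 else 3) \<le> k"
  proof (rule ccontr)
    assume "\<not> (if even n then 2 else 3) \<le> k"
    then have "k \<le> 2" by (auto split: if_splits)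
    then have "even n \<and> k \<ge> 2" using lower[OF assms] k by blast
    then show False using \<open>\<not> (if even n then 2 else 3) \<le> k\<close> by auto
  qed
qed


end
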